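(* Let $X$ be any real random variable and $q(x)=\min\{\mathbb{P}(X\leqslant x),\mathbb{P}(X\geqslant x)\}$. Let $p>-1$, $p\neq 0$. (a) If $p>0$, then $\big(2^p(p+1)\big)^{-1}\leqslant\mathbb{E}\big(q(X)^p\big)\leqslant 1$. (b) If $-1<p<0$, then $1\leqslant\mathbb{E}\big(q(X)^p\big)\leqslant\big(2^p(p+1)\big)^{-1}$. *)

theory Defs
  imports "HOL-Probability.Probability"
begin

definition qfun :: "'a measure \<Rightarrow> ('a \<Rightarrow> real) \<Rightarrow> real \<Rightarrow> real" where
  "qfun M X x = min (measure M {\<omega> \<in> space M. X \<omega> \<le> x}) (measure M {\<omega> \<in> space M. X \<omega> \<ge> x})"

end

theory Submission
  imports Defs
begin

lemma arith_c:
  fixes p :: real assumes "p > -1" "p \<noteq> 0"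
  shows "2 powr (-p) - 2 * ((2 powr (-p)) powr (1/p+1) / (1/p+1)) = 1 / (2 powr p * (p+1))"
proof -
  have a0: "(2 powr (-p)) powr (1/p+1) = (2::real) powr (-p - 1)"
  proof -
    have "-p*(1/p+1) = -p - 1" using assms by (simp add: field_simps)
    then show ?thesis unfolding powr_powr by simp
  qed
  have a: "(2 powr (-p)) powr (1/p+1) = 2 powr (-p) / 2"
    unfolding a0 by (simp add: powr_diff)
  have b: "1/p + 1 = (1+p)/p" using assms by (simp add: field_simps)
  have c: "2 powr (-p) = 1 / 2 powr p" by (simp add: powr_minus_divide)
  have "p + 1 > 0" using assms by simp
  moreover have "(2::real) powr p > 0" by simp
  ultimately have "(2::real) powr p + p * 2 powr p > 0" by (metis distrib_left mult.commute mult_1 mult_pos_pos add.commute)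
  have gen: "\<And>y::real. y > 0 \<Longrightarrow> y + p*y > 0 \<Longrightarrow> 1/y - 2*((1/y/2)/((1+p)/p)) = 1/(y*(p+1))"
    using assms by (simp add: field_simps)
  show ?thesis unfolding a unfolding b unfolding c
    by (rule gen) fact+
qed

lemma powr_neg_ge1:
  fixes q p :: real assumes "0 < q" "q \<le> 1" "p < 0"
  shows "1 \<le> q powr p"
  by (smt (verit) assms(1,2,3) powr01_less_one powr_one_eq_one)

lemma powr_le_iff_pos:
  fixes q p s :: real assumes "0 \<le> q" "0 \<le> s" "p > 0"
  shows "q powr p \<le> s \<longleftrightarrow> q \<le> s powr (1/p)"
proof
  assume h: "q powr p \<le> s"
  have "q = (q powr p) powr (1/p)" using assms by (simp add: powr_powr)
  also have "\<dots> \<le> s powr (1/p)" using h assms by (intro powr_mono2) auto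
  finally show "q \<le> s powr (1/p)" .
next
  assume h: "q \<le> s powr (1/p)"
  have "q powr p \<le> (s powr (1/p)) powr p" using h assms by (intro powr_mono2) auto
  also have "\<dots> = s" using assms by (simp add: powr_powr)
  finally show "q powr p \<le> s" .
qed

lemma powr_neg_gt:
  fixes q p s :: real assumes "0 < q" "0 < s" "p < 0" "s < q powr p"
  shows "q < s powr (1/p)"
proof -
  have "q = (q powr p) powr (1/p)" using assms by (simp add: powr_powr)
  also have "\<dots> < s powr (1/p)" using assms by (intro powr_less_mono2_neg) auto
  finally show ?thesis .
qed

context prob_space begin

lemma cdf_comp_le:
  fixes X :: "'a \<Rightarrow> real"
  assumes X: "X \<in> borel_measurable M" and t: "0 \<le> t"
  shows "emeasure M {\<omega> \<in> space M. measure M {\<omega>'\<in>space M. X \<omega>' \<le> X \<omega>} \<le> t} \<le> ennreal t"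
proof -
  define F where "F x = measure M {\<omega>'\<in>space M. X \<omega>' \<le> x}" for x
  have meas: "\<And>y. {\<omega>'\<in>space M. X \<omega>' \<le> y} \<in> events" using X by measurable
  have monoF: "mono F"
    unfolding F_def mono_def
    by (intro allI impI finite_measure_mono meas) auto
  define A where "A = {x. F x \<le> t}"
  have A: "A \<in> sets borel"
    unfolding A_def using borel_measurable_mono[OF monoF] by measurable
  define N where "N = distr M borel X"
  have sN: "sets N = sets borel" unfolding N_def by simp
  have fN: "emeasure N (space N) \<noteq> \<infinity>"
    unfolding N_def using X by (simp add: emeasure_distr)
  have eq: "{\<omega> \<in> space M. F (X \<omega>) \<le> t} = X -` A \<inter> space M" unfolding A_def by auto
  have "emeasure N A \<le> ennreal t"
    unfolding inner_regular[OF sN fN A]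
  proof (rule SUP_least)
    fix K assume K: "K \<in> {K. K \<subseteq> A \<and> compact K}"
    show "emeasure N K \<le> ennreal t"
    proof (cases "K = {}")
      case True then show ?thesis by simp
    next
      case False
      then obtain k where k: "k \<in> K" "\<And>x. x \<in> K \<Longrightarrow> x \<le> k"
        using compact_attains_sup[of K] K by auto
      have "emeasure N K \<le> emeasure N {..k}"
        apply (rule emeasure_mono) using k apply auto[1] unfolding N_def by simp
      also have "\<dots> = emeasure M {\<omega>'\<in>space M. X \<omega>' \<le> k}"
        unfolding N_def using X by (subst emeasure_distr) (auto intro!: arg_cong[where f="emeasure M"])
      also have "\<dots> = ennreal (F k)" unfolding F_def
        by (rule emeasure_eq_measure)
      also have "\<dots> \<le> ennreal t" using k K unfolding A_def by (auto intro!: ennreal_leI)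
      finally show ?thesis .
    qed
  qed
  moreover have "emeasure N A = emeasure M {\<omega> \<in> space M. F (X \<omega>) \<le> t}"
    unfolding eq N_def using X A by (simp add: emeasure_distr)
  ultimately show ?thesis unfolding F_def by simp
qed


lemma F_meas:
  fixes X :: "'a \<Rightarrow> real"
  assumes X: "X \<in> borel_measurable M"
  shows "(\<lambda>x. measure M {\<omega>'\<in>space M. X \<omega>' \<le> x}) \<in> borel_measurable borel"
proof -
  have meas: "\<And>y. {\<omega>'\<in>space M. X \<omega>' \<le> y} \<in> events" using X by measurable
  show ?thesis
    by (rule borel_measurable_mono, unfold mono_def)
       (intro allI impI finite_measure_mono meas, auto)
qed

lemma G_meas:
  fixes X :: "'a \<Rightarrow> real"
  assumes X: "X \<in> borel_measurable M"
  shows "(\<lambda>x. measure M {\<omega>'\<in>space M. X \<omega>' \<ge> x}) \<in> borel_measurable borel"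
proof -
  have X': "(\<lambda>\<omega>. - X \<omega>) \<in> borel_measurable M" using X by measurable
  have eq: "(\<lambda>x. measure M {\<omega>'\<in>space M. X \<omega>' \<ge> x}) =
     (\<lambda>x. measure M {\<omega>'\<in>space M. - X \<omega>' \<le> x}) \<circ> uminus"
    by (auto simp: fun_eq_iff)
  show ?thesis unfolding eq using F_meas[OF X'] by measurable
qed

lemma q_meas:
  fixes X :: "'a \<Rightarrow> real"
  assumes X: "X \<in> borel_measurable M"
  shows "qfun M X \<in> borel_measurable borel"
  unfolding qfun_def[abs_def] using F_meas[OF X] G_meas[OF X] by measurable

lemma q_small:
  fixes X :: "'a \<Rightarrow> real"
  assumes X: "X \<in> borel_measurable M" and t: "0 \<le> t"
  shows "emeasure M {\<omega> \<in> space M. qfun M X (X \<omega>) \<le> t} \<le> ennreal (2 * t)"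
proof -
  have X': "(\<lambda>\<omega>. - X \<omega>) \<in> borel_measurable M" using X by measurable
  define A where "A = {\<omega> \<in> space M. measure M {\<omega>'\<in>space M. X \<omega>' \<le> X \<omega>} \<le> t}"
  define B where "B = {\<omega> \<in> space M. measure M {\<omega>'\<in>space M. - X \<omega>' \<le> - X \<omega>} \<le> t}"
  have Am: "A \<in> events" unfolding A_def using F_meas[OF X] X by measurable
  have Bm: "B \<in> events" unfolding B_def using F_meas[OF X'] X' by measurable
  have "{\<omega> \<in> space M. qfun M X (X \<omega>) \<le> t} \<subseteq> A \<union> B"
    unfolding A_def B_def qfun_def by (auto simp: min_le_iff_disj)
  then have "emeasure M {\<omega> \<in> space M. qfun M X (X \<omega>) \<le> t} \<le> emeasure M (A \<union> B)"
    by (intro emeasure_mono) (use Am Bm in auto)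
  also have "\<dots> \<le> emeasure M A + emeasure M B"
    by (rule emeasure_subadditive[OF Am Bm])
  also have "\<dots> \<le> ennreal t + ennreal t"
    unfolding A_def B_def
    using cdf_comp_le[OF X t] cdf_comp_le[OF X' t] by (intro add_mono) auto
  also have "\<dots> = ennreal (2 * t)" using t by (simp add: ennreal_plus[symmetric])
  finally show ?thesis .
qed

lemma layer_cake:
  fixes f :: "'a \<Rightarrow> real"
  assumes f: "f \<in> borel_measurable M" and nn: "\<And>\<omega>. \<omega> \<in> space M \<Longrightarrow> 0 \<le> f \<omega>"
  shows "(\<integral>\<^sup>+\<omega>. ennreal (f \<omega>) \<partial>M) =
    (\<integral>\<^sup>+ s. indicator {0..} s * emeasure M {\<omega>\<in>space M. s < f \<omega>} \<partial>lborel)"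
proof -
  define h where "h = (\<lambda>(\<omega>, s::real). if 0 \<le> s \<and> s < f \<omega> then 1 else (0::ennreal))"
  interpret P: pair_sigma_finite M lborel
    by (simp add: pair_sigma_finite_def sigma_finite_measure_axioms lborel.sigma_finite_measure_axioms)
  have hm: "h \<in> borel_measurable (M \<Otimes>\<^sub>M lborel)"
    unfolding h_def using f by measurable
  have 1: "(\<integral>\<^sup>+\<omega>. ennreal (f \<omega>) \<partial>M) = (\<integral>\<^sup>+\<omega>. (\<integral>\<^sup>+s. h (\<omega>, s) \<partial>lborel) \<partial>M)"
  proof (rule nn_integral_cong)
    fix \<omega> assume \<omega>: "\<omega> \<in> space M"
    have "(\<integral>\<^sup>+s. h (\<omega>, s) \<partial>lborel) = (\<integral>\<^sup>+s. indicator {0..<f \<omega>} s \<partial>lborel)"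
      unfolding h_def by (intro nn_integral_cong) (auto simp: indicator_def)
    also have "\<dots> = ennreal (f \<omega>)" using nn[OF \<omega>] by simp
    finally show "ennreal (f \<omega>) = (\<integral>\<^sup>+s. h (\<omega>, s) \<partial>lborel)" by simp
  qed
  have 2: "(\<integral>\<^sup>+\<omega>. (\<integral>\<^sup>+s. h (\<omega>, s) \<partial>lborel) \<partial>M) = (\<integral>\<^sup>+s. (\<integral>\<^sup>+\<omega>. h (\<omega>, s) \<partial>M) \<partial>lborel)"
    using P.Fubini[OF hm] by simp
  have 3: "(\<integral>\<^sup>+\<omega>. h (\<omega>, s) \<partial>M) = indicator {0..} s * emeasure M {\<omega>\<in>space M. s < f \<omega>}" for s
  proof -
    have m: "{\<omega>\<in>space M. s < f \<omega>} \<in> sets M" using f by measurable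
    have "(\<integral>\<^sup>+\<omega>. h (\<omega>, s) \<partial>M) = (\<integral>\<^sup>+\<omega>. indicator {0..} s * indicator {\<omega>\<in>space M. s < f \<omega>} \<omega> \<partial>M)"
      unfolding h_def by (intro nn_integral_cong) (auto simp: indicator_def)
    also have "\<dots> = indicator {0..} s * emeasure M {\<omega>\<in>space M. s < f \<omega>}"
      by (rule nn_integral_cmult_indicator[OF m])
    finally show ?thesis .
  qed
  show ?thesis unfolding 1 2 3 ..
qed

end


theorem proposition3p2:
  fixes M :: "'a measure" and X :: "'a \<Rightarrow> real" and p :: real
  assumes "prob_space M"
    and "X \<in> borel_measurable M"
    and "p > -1" and "p \<noteq> 0"
  shows "(p > 0 \<longrightarrow>
            ennreal (1 / (2 powr p * (p + 1))) \<le> (\<integral>\<^sup>+ \<omega>. ennreal (qfun M X (X \<omega>) powr p) \<partial>M)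
          \<and> (\<integral>\<^sup>+ \<omega>. ennreal (qfun M X (X \<omega>) powr p) \<partial>M) \<le> 1)
       \<and> (p < 0 \<longrightarrow>
            1 \<le> (\<integral>\<^sup>+ \<omega>. ennreal (qfun M X (X \<omega>) powr p) \<partial>M)
          \<and> (\<integral>\<^sup>+ \<omega>. ennreal (qfun M X (X \<omega>) powr p) \<partial>M) \<le> ennreal (1 / (2 powr p * (p + 1))))"
proof -
  interpret prob_space M by fact
  note X = assms(2)
  define q where "q \<omega> = qfun M X (X \<omega>)" for \<omega>
  define f where "f \<omega> = q \<omega> powr p" for \<omega>
  have qm: "q \<in> borel_measurable M"
    unfolding q_def using q_meas[OF X] X by measurable
  have fm: "f \<in> borel_measurable M" unfolding f_def using qm by measurable
  have q01: "0 \<le> q \<omega> \<and> q \<omega> \<le> 1" for \<omega>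
    unfolding q_def qfun_def by (auto simp: min_le_iff_disj)
  have f0: "0 \<le> f \<omega>" for \<omega> unfolding f_def by simp
  have qs: "prob {\<omega>\<in>space M. q \<omega> \<le> t} \<le> 2 * t" if t: "0 \<le> t" for t
  proof -
    have "ennreal (prob {\<omega>\<in>space M. q \<omega> \<le> t}) \<le> ennreal (2 * t)"
      using q_small[OF X t] unfolding q_def by (simp add: emeasure_eq_measure)
    then show ?thesis using t by (simp add: ennreal_le_iff)
  qed
  have qsm: "{\<omega>\<in>space M. q \<omega> \<le> t} \<in> events" for t using qm by measurable
  have fsm: "{\<omega>\<in>space M. s < f \<omega>} \<in> events" for s using fm by measurable
  have LC: "(\<integral>\<^sup>+\<omega>. ennreal (f \<omega>) \<partial>M) =
    (\<integral>\<^sup>+ s. indicator {0..} s * emeasure M {\<omega>\<in>space M. s < f \<omega>} \<partial>lborel)"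
    by (rule layer_cake[OF fm f0])
  have INT: "(\<integral>\<^sup>+ \<omega>. ennreal (qfun M X (X \<omega>) powr p) \<partial>M) = (\<integral>\<^sup>+\<omega>. ennreal (f \<omega>) \<partial>M)"
    unfolding f_def q_def ..
  define c where "c = (2::real) powr (-p)"
  have c0: "c > 0" unfolding c_def by simp
  have key: "c - 2 * (c powr (1/p+1)/(1/p+1)) = 1/(2 powr p*(p+1))"
    unfolding c_def by (rule arith_c) (use assms in auto)
  have chalf: "c powr (1/p) = 1/2"
  proof -
    have "-p*(1/p) = -1" using assms by simp
    then show ?thesis unfolding c_def powr_powr by (simp add: powr_minus_divide)
  qed
  show ?thesis unfolding INT
  proof (intro conjI impI)
    assume p: "p > 0"
    show "(\<integral>\<^sup>+\<omega>. ennreal (f \<omega>) \<partial>M) \<le> 1"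
    proof -
      have "(\<integral>\<^sup>+\<omega>. ennreal (f \<omega>) \<partial>M) \<le> (\<integral>\<^sup>+\<omega>. 1 \<partial>M)"
        using q01 p unfolding f_def by (intro nn_integral_mono) (auto intro!: powr_le1)
      also have "\<dots> = 1" by (simp add: emeasure_space_1)
      finally show ?thesis .
    qed
  next
    assume p: "p > 0"
    have "0 < 1/p" using p by simp
    then have pp: "-1 < 1/p" by linarith
    have g: "((\<lambda>s. 1 - 2 * s powr (1/p)) has_integral (c - 2 * (c powr (1/p+1)/(1/p+1)))) {0..c}"
      using has_integral_diff[OF has_integral_const_real[of "1::real" 0 c]
          has_integral_mult_right[OF has_integral_powr_from_0[of "1/p" c], of 2]] c0 p pp
      by simp
    have gnn: "0 \<le> 1 - 2 * s powr (1/p)" if "s \<in> {0..c}" for s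
    proof -
      have "s powr (1/p) \<le> c powr (1/p)" using that p by (intro powr_mono2) auto
      then show ?thesis using chalf by simp
    qed
    have I: "(\<integral>\<^sup>+s. ennreal (indicator {0..c} s * (1 - 2 * s powr (1/p))) \<partial>lborel)
        = ennreal (c - 2 * (c powr (1/p+1)/(1/p+1)))"
      by (rule nn_integral_has_integral_lebesgue[OF gnn g])
    have "ennreal (1 / (2 powr p * (p + 1))) =
        (\<integral>\<^sup>+s. ennreal (indicator {0..c} s * (1 - 2 * s powr (1/p))) \<partial>lborel)"
      unfolding I key ..
    also have "\<dots> \<le> (\<integral>\<^sup>+ s. indicator {0..} s * emeasure M {\<omega>\<in>space M. s < f \<omega>} \<partial>lborel)"
    proof (rule nn_integral_mono)
      fix s :: real
      show "ennreal (indicator {0..c} s * (1 - 2 * s powr (1/p)))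
          \<le> indicator {0..} s * emeasure M {\<omega>\<in>space M. s < f \<omega>}"
      proof (cases "s \<in> {0..c}")
        case False then show ?thesis by simp
      next
        case True
        have eq: "{\<omega>\<in>space M. s < f \<omega>} = space M - {\<omega>\<in>space M. q \<omega> \<le> s powr (1/p)}"
          using True p q01 unfolding f_def by (auto simp: powr_le_iff_pos[symmetric])
        have "prob {\<omega>\<in>space M. s < f \<omega>} = 1 - prob {\<omega>\<in>space M. q \<omega> \<le> s powr (1/p)}"
          unfolding eq by (rule prob_compl[OF qsm])
        also have "\<dots> \<ge> 1 - 2 * s powr (1/p)" using qs[of "s powr (1/p)"] by simp
        finally have "1 - 2 * s powr (1/p) \<le> prob {\<omega>\<in>space M. s < f \<omega>}" .
        then show ?thesis using True by (simp add: emeasure_eq_measure ennreal_leI)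
      qed
    qed
    finally show "ennreal (1 / (2 powr p * (p + 1))) \<le> (\<integral>\<^sup>+\<omega>. ennreal (f \<omega>) \<partial>M)"
      unfolding LC .
  next
    assume p: "p < 0"
    have N: "{\<omega>\<in>space M. q \<omega> \<le> 0} \<in> null_sets M"
      using qs[of 0] qsm[of 0] by (intro null_setsI) (auto simp: emeasure_eq_measure measure_nonneg order_antisym)
    have AE: "AE \<omega> in M. 1 \<le> ennreal (f \<omega>)"
    proof (rule AE_I'[OF N])
      show "{\<omega> \<in> space M. \<not> 1 \<le> ennreal (f \<omega>)} \<subseteq> {\<omega>\<in>space M. q \<omega> \<le> 0}"
      proof safe
        fix \<omega> assume \<omega>: "\<omega> \<in> space M" "\<not> 1 \<le> ennreal (f \<omega>)"
        show "q \<omega> \<le> 0"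
        proof (rule ccontr)
          assume "\<not> q \<omega> \<le> 0"
          then have "1 \<le> f \<omega>" unfolding f_def using q01[of \<omega>] p by (intro powr_neg_ge1) auto
          then have "ennreal 1 \<le> ennreal (f \<omega>)" by (rule ennreal_leI)
          then show False using \<omega>(2) by simp
        qed
      qed
    qed
    have "1 = (\<integral>\<^sup>+\<omega>. 1 \<partial>M)" by (simp add: emeasure_space_1)
    also have "\<dots> \<le> (\<integral>\<^sup>+\<omega>. ennreal (f \<omega>) \<partial>M)"
      by (rule nn_integral_mono_AE[OF AE])
    finally show "1 \<le> (\<integral>\<^sup>+\<omega>. ennreal (f \<omega>) \<partial>M)" .
  next
    assume p: "p < 0"
    have e: "1/p < -1" using p assms(3) by (simp add: field_simps)
    have g: "((\<lambda>s. 2 * s powr (1/p)) has_integral (2 * (-(c powr (1/p+1))/(1/p+1)))) {c..}"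
      by (rule has_integral_mult_right[OF has_integral_powr_to_inf[OF e c0]])
    have gnn: "0 \<le> 2 * s powr (1/p)" if "s \<in> {c..}" for s by simp
    have I: "(\<integral>\<^sup>+s. ennreal (indicator {c..} s * (2 * s powr (1/p))) \<partial>lborel)
        = ennreal (2 * (-(c powr (1/p+1))/(1/p+1)))"
      by (rule nn_integral_has_integral_lebesgue[OF gnn g])
    have J: "(\<integral>\<^sup>+s. indicator {0..c} s \<partial>lborel) = ennreal c" using c0 by simp
    have pos2: "0 \<le> 2 * (-(c powr (1/p+1))/(1/p+1))"
      using e by (intro mult_nonneg_nonneg divide_nonpos_neg) auto
    have "(\<integral>\<^sup>+ s. indicator {0..} s * emeasure M {\<omega>\<in>space M. s < f \<omega>} \<partial>lborel)
       \<le> (\<integral>\<^sup>+ s. indicator {0..c} s + ennreal (indicator {c..} s * (2 * s powr (1/p))) \<partial>lborel)"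
    proof (rule nn_integral_mono)
      fix s :: real
      show "indicator {0..} s * emeasure M {\<omega>\<in>space M. s < f \<omega>}
         \<le> indicator {0..c} s + ennreal (indicator {c..} s * (2 * s powr (1/p)))"
      proof (cases "s < 0")
        case True then show ?thesis by simp
      next
        case s0: False
        show ?thesis
        proof (cases "s \<le> c")
          case True
          have "emeasure M {\<omega>\<in>space M. s < f \<omega>} \<le> 1"
            by (simp add: emeasure_eq_measure)
          then show ?thesis using True s0 by (simp add: add_increasing2)
        next
          case False
          then have sc: "s > c" by simp
          have sub: "{\<omega>\<in>space M. s < f \<omega>} \<subseteq> {\<omega>\<in>space M. q \<omega> \<le> s powr (1/p)}"
          proof safe
            fix \<omega> assume \<omega>: "\<omega> \<in> space M" "s < f \<omega>"
            have "q \<omega> \<noteq> 0" using \<omega> sc c0 unfolding f_def by auto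
            then have "q \<omega> > 0" using q01[of \<omega>] by simp
            then show "q \<omega> \<le> s powr (1/p)"
              using powr_neg_gt[of "q \<omega>" s p] \<omega> sc c0 p unfolding f_def by simp
          qed
          have "emeasure M {\<omega>\<in>space M. s < f \<omega>} \<le> emeasure M {\<omega>\<in>space M. q \<omega> \<le> s powr (1/p)}"
            by (rule emeasure_mono[OF sub qsm])
          also have "\<dots> \<le> ennreal (2 * s powr (1/p))"
            using qs[of "s powr (1/p)"] by (simp add: emeasure_eq_measure ennreal_leI)
          finally show ?thesis using sc c0 by (simp add: add_increasing)
        qed
      qed
    qed
    also have "\<dots> = (\<integral>\<^sup>+s. indicator {0..c} s \<partial>lborel) +
        (\<integral>\<^sup>+s. ennreal (indicator {c..} s * (2 * s powr (1/p))) \<partial>lborel)"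
      by (rule nn_integral_add) auto
    also have "\<dots> = ennreal (c - 2 * (c powr (1/p+1)/(1/p+1)))"
      unfolding I J using c0 pos2 by (simp add: ennreal_plus[symmetric])
    also have "\<dots> = ennreal (1 / (2 powr p * (p + 1)))" unfolding key ..
    finally show "(\<integral>\<^sup>+\<omega>. ennreal (f \<omega>) \<partial>M) \<le> ennreal (1 / (2 powr p * (p + 1)))"
      unfolding LC .
  qed
qed

end
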